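(* Let $S=\{\rho_1=0<\rho_2<\cdots\}$ be an Arf numerical semigroup with conductor $c=\rho_r$. If $j$ is a positive integer with $j<c+r$, then $\beta(\rho_j)\le r-1$ and $\#A[\rho_j]\le 2r-2<\#A[\rho_{c+r}]$.
   Context: A numerical semigroup is a submonoid $S$ of $(\mathbb{N}_0,+)$ with finite complement, with elements listed increasingly. $S$ is Arf if $\rho_i+\rho_j-\rho_k\in S$ for all positive integers $i\ge j\ge k$. The conductor $c$ is the smallest integer such that all integers $\ge c$ lie in $S$, with $c=\rho_r$. For $\rho\in S$: $A[\rho]=\{p\in S:\ \rho-p\in S\}$ and $\beta(\rho)=\max\{j\ge1:\ \rho_1,\dots,\rho_j\in A[\rho]\ \text{and}\ 2\rho_j\le\rho\}$. *)

theory Defs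
  imports Main "HOL-Library.Infinite_Set"
begin

definition numerical_semigroup :: "nat set \<Rightarrow> bool" where
  "numerical_semigroup S \<longleftrightarrow> 0 \<in> S \<and> (\<forall>a\<in>S. \<forall>b\<in>S. a + b \<in> S) \<and> finite (UNIV - S)"

text \<open>Elements of S listed increasingly, 1-indexed: rho S 1 = 0 < rho S 2 < ...\<close>
definition rho :: "nat set \<Rightarrow> nat \<Rightarrow> nat" where
  "rho S i = enumerate S (i - 1)"

definition conductor :: "nat set \<Rightarrow> nat" where
  "conductor S = (LEAST c. \<forall>n\<ge>c. n \<in> S)"

definition arf :: "nat set \<Rightarrow> bool" where
  "arf S \<longleftrightarrow> numerical_semigroup S \<and>
     (\<forall>i j k. 1 \<le> k \<and> k \<le> j \<and> j \<le> i \<longrightarrow> rho S i + rho S j - rho S k \<in> S)"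

definition Aset :: "nat set \<Rightarrow> nat \<Rightarrow> nat set" where
  "Aset S p = {q \<in> S. q \<le> p \<and> p - q \<in> S}"

definition beta :: "nat set \<Rightarrow> nat \<Rightarrow> nat" where
  "beta S p = Max {j. 1 \<le> j \<and> (\<forall>l\<in>{1..j}. rho S l \<in> Aset S p) \<and> 2 * rho S j \<le> p}"

end

theory Submission
  imports Defs
begin

theorem mainTheorem8:
  fixes S :: "nat set" and r j :: nat
  assumes "arf S"
    and "1 \<le> r" and "rho S r = conductor S"
    and "1 \<le> j" and "j < conductor S + r"
  shows "beta S (rho S j) \<le> r - 1
       \<and> card (Aset S (rho S j)) \<le> 2 * r - 2
       \<and> 2 * r - 2 < card (Aset S (rho S (conductor S + r)))"
proof -
  define c where "c = conductor S"
  define e where "e = enumerate S"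
  have ns: "numerical_semigroup S" using assms(1) arf_def by blast
  have S0: "0 \<in> S" and fin: "finite (UNIV - S)" using ns numerical_semigroup_def by auto
  have inf: "infinite S"
  proof
    assume "finite S"
    then have "finite (S \<union> (UNIV - S))" using fin by blast
    then show False by simp
  qed
  obtain k where k: "UNIV - S \<subseteq> {..<k}" using finite_nat_bounded[OF fin] by blast
  have ex: "\<forall>n\<ge>k. n \<in> S" using k by auto
  have cond: "\<forall>n\<ge>c. n \<in> S" unfolding c_def conductor_def
    by (rule LeastI_ex) (use ex in blast)
  have rr: "e (r - 1) = c" using assms(3) unfolding rho_def e_def c_def .
  have eS: "\<And>n. e n \<in> S" unfolding e_def using enumerate_in_set[OF inf] .
  have emono: "\<And>m n. e m < e n \<longleftrightarrow> m < n" unfolding e_def using inf by simp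
  have eex: "\<And>s. s \<in> S \<Longrightarrow> \<exists>n. e n = s" unfolding e_def using enumerate_Ex[OF inf] by blast
  have einj: "inj e" unfolding e_def using inj_enumerate[OF inf] .
  define L where "L = {q \<in> S. q < c}"
  have Leq: "L = e ` {..<r-1}"
  proof
    show "L \<subseteq> e ` {..<r-1}"
    proof
      fix q assume "q \<in> L"
      then have "q \<in> S" "q < c" by (auto simp: L_def)
      then obtain n where "e n = q" using eex by blast
      with \<open>q < c\<close> rr emono have "n < r - 1" by metis
      then show "q \<in> e ` {..<r-1}" using \<open>e n = q\<close> by blast
    qed
    show "e ` {..<r-1} \<subseteq> L" using eS emono rr unfolding L_def by (metis (no_types, lifting) image_subsetI lessThan_iff mem_Collect_eq)
  qed
  have cardL: "card L = r - 1" unfolding Leq using einj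
    by (simp add: card_image inj_on_subset)
  have finL: "finite L" unfolding Leq by simp
  have high: "\<And>m. e (r - 1 + m) = c + m"
  proof -
    fix m show "e (r - 1 + m) = c + m"
    proof (induction m)
      case 0 then show ?case using rr by simp
    next
      case (Suc m)
      have gt: "e (r - 1 + Suc m) > c + m" using Suc emono by (metis lessI add_Suc_right)
      have inS: "c + Suc m \<in> S" using cond by simp
      show ?case
      proof (rule ccontr)
        assume "e (r - 1 + Suc m) \<noteq> c + Suc m"
        with gt have lt: "c + Suc m < e (r - 1 + Suc m)" by simp
        obtain n where n: "e n = c + Suc m" using eex inS by blast
        have "e (r - 1 + m) < e n" using Suc n by simp
        then have "r - 1 + m < n" using emono by blast
        moreover have "n < r - 1 + Suc m" using emono lt n by metis
        ultimately show False by simp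
      qed
    qed
  qed
  have r2c: "rho S (c + r) = 2 * c" unfolding rho_def e_def[symmetric]
    using high[of c] assms(2) by (simp add: add.commute)
  define p where "p = rho S j"
  have pS: "p \<in> S" unfolding p_def rho_def e_def[symmetric] by (rule eS)
  have p2c: "p < 2 * c"
  proof -
    have "e (j - 1) < e (c + r - 1)" using emono assms(4,5) c_def by simp
    then show ?thesis using r2c unfolding p_def rho_def e_def by simp
  qed
  have finA: "finite (Aset S x)" for x
    by (rule finite_subset[of _ "{..x}"]) (auto simp: Aset_def)
  have part2: "card (Aset S p) \<le> 2 * r - 2"
  proof -
    have "Aset S p \<subseteq> L \<union> (\<lambda>q. p - q) ` L"
    proof
      fix q assume q: "q \<in> Aset S p"
      then have qS: "q \<in> S" "q \<le> p" "p - q \<in> S" by (auto simp: Aset_def)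
      show "q \<in> L \<union> (\<lambda>q. p - q) ` L"
      proof (cases "q < c")
        case True then show ?thesis using qS by (simp add: L_def)
      next
        case False
        then have "p - q < c" using p2c qS by simp
        then have "p - q \<in> L" using qS by (simp add: L_def)
        moreover have "q = p - (p - q)" using qS by simp
        ultimately show ?thesis by blast
      qed
    qed
    then have "card (Aset S p) \<le> card (L \<union> (\<lambda>q. p - q) ` L)"
      by (rule card_mono[rotated]) (simp add: finL)
    also have "\<dots> \<le> card L + card ((\<lambda>q. p - q) ` L)" by (rule card_Un_le)
    also have "\<dots> \<le> card L + card L" using card_image_le[OF finL] by simp
    finally show ?thesis using cardL by simp
  qed
  have part3: "2 * r - 2 < card (Aset S (2 * c))"
  proof -
    let ?I = "(\<lambda>q. 2 * c - q) ` L"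
    have sub: "L \<union> ?I \<union> {c} \<subseteq> Aset S (2 * c)"
    proof -
      have "L \<subseteq> Aset S (2*c)" using cond by (auto simp: L_def Aset_def)
      moreover have "?I \<subseteq> Aset S (2*c)" using cond by (auto simp: L_def Aset_def)
      moreover have "c \<in> Aset S (2*c)" using cond by (auto simp: Aset_def)
      ultimately show ?thesis by blast
    qed
    have injI: "inj_on (\<lambda>q. 2 * c - q) L" by (rule inj_onI) (auto simp: L_def)
    have cI: "card ?I = r - 1" using card_image[OF injI] cardL by simp
    have d1: "L \<inter> ?I = {}" by (auto simp: L_def)
    have d2: "c \<notin> L \<union> ?I" by (auto simp: L_def)
    have "card (L \<union> ?I \<union> {c}) = card (L \<union> ?I) + 1"
      using d2 finL by simp
    also have "card (L \<union> ?I) = card L + card ?I" using d1 finL by (simp add: card_Un_disjoint)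
    finally have "card (L \<union> ?I \<union> {c}) = 2 * r - 1" using cI cardL assms(2) by simp
    moreover have "card (L \<union> ?I \<union> {c}) \<le> card (Aset S (2 * c))"
      by (rule card_mono[OF finA sub])
    ultimately show ?thesis using assms(2) by simp
  qed
  have part1: "beta S p \<le> r - 1"
  proof -
    define B where "B = {j. 1 \<le> j \<and> (\<forall>l\<in>{1..j}. rho S l \<in> Aset S p) \<and> 2 * rho S j \<le> p}"
    have bnd: "\<And>i. i \<in> B \<Longrightarrow> i \<le> r - 1"
    proof -
      fix i assume "i \<in> B"
      then have "1 \<le> i" "2 * e (i - 1) \<le> p" by (auto simp: B_def rho_def e_def)
      then have "e (i - 1) < c" using p2c by simp
      then have "i - 1 < r - 1" using emono rr by metis
      then show "i \<le> r - 1" by simp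
    qed
    have "1 \<in> B" using S0 pS unfolding B_def rho_def e_def[symmetric]
      by (auto simp: Aset_def e_def enumerate_0 intro!: Least_equality)
    moreover have "finite B" using bnd by (meson finite_atMost finite_subset subsetI atMost_iff)
    ultimately have "Max B \<le> r - 1" using bnd by (subst Max_le_iff) auto
    then show ?thesis unfolding beta_def B_def .
  qed
  show ?thesis using part1 part2 part3 r2c unfolding p_def c_def by simp
qed

end
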